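(* Let $n=2^s$, $q=2^r$ ($s,r$ positive integers) and $N=q^{\binom{n}{2}}\prod_{j=2}^{n}(q^j-1)=|SL(n,q)|$. For $a\in\mathbb{F}_q^*$, the Hamming weight of the codeword $c(a)=(tr(a\,Tr(g_1)),\dots,tr(a\,Tr(g_N)))\in\mathbb{F}_2^N$ is \[ w(c(a))=\tfrac12\Big(N-q^{\binom{n}{2}}K_{n-1}(\lambda;a)\Big). \]
   Context: $\mathbb{F}_q$ is the field with $q$ elements, $tr$ the absolute trace to $\mathbb{F}_2$, $\lambda(x)=(-1)^{tr(x)}$. $g_1,\dots,g_N$ is an ordering of $SL(n,q)$ and $Tr$ the matrix trace. For $m\ge1$, $K_m(\lambda;a)=\sum_{\alpha_1,\dots,\alpha_m\in\mathbb{F}_q^*}\lambda(\alpha_1+\cdots+\alpha_m+a\alpha_1^{-1}\cdots\alpha_m^{-1})$. *)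

theory Defs
  imports "HOL-Analysis.Analysis" "HOL-Library.FuncSet"
begin

definition abs_tr :: "nat \<Rightarrow> 'a::field \<Rightarrow> 'a" where
  "abs_tr r x = (\<Sum>i<r. x ^ (2 ^ i))"

text \<open>The additive character lambda(x) = (-1)^(tr x); tr x lies in F_2 = {0,1}.\<close>
definition lam :: "nat \<Rightarrow> 'a::field \<Rightarrow> int" where
  "lam r x = (if abs_tr r x = 0 then 1 else -1)"

definition kloosterman :: "nat \<Rightarrow> nat \<Rightarrow> 'a::{field,finite} \<Rightarrow> int" where
  "kloosterman r m a =
     (\<Sum>\<alpha>\<in>(PiE {..<m} (\<lambda>_. UNIV - {0})).
        lam r ((\<Sum>i<m. \<alpha> i) + a * inverse (\<Prod>i<m. \<alpha> i)))"

definition SL :: "('a::{field,finite}^'n^'n) set" where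
  "SL = {g. det g = 1}"

text \<open>Hamming weight of the codeword c(a) = (tr(a Tr g_1), ..., tr(a Tr g_N)):
  the number of g in SL(n,q) whose coordinate is nonzero (independent of the ordering).\<close>
definition codeword_weight :: "nat \<Rightarrow> 'a::{field,finite} \<Rightarrow> ('a^'n^'n) itself \<Rightarrow> nat" where
  "codeword_weight r a _ = card {g::'a^'n^'n. g \<in> SL \<and> abs_tr r (a * trace g) \<noteq> 0}"

end

theory Submission
  imports Defs "HOL-Number_Theory.Residues" "HOL-Computational_Algebra.Polynomial"
begin


lemma two_eq_zero:
  assumes "CARD('a::{field,finite}) = 2 ^ r"
  shows "(2::'a) = 0"
proof -
  have pos: "CHAR('a) > 0" by (rule finite_imp_CHAR_pos) simp
  have pr: "prime CHAR('a)" using prime_CHAR_semidom[OF pos] .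
  have "CHAR('a) dvd 2 ^ r" using CHAR_dvd_CARD[where 'a='a] assms by simp
  then have "CHAR('a) dvd 2" using pr prime_dvd_power by blast
  then have "CHAR('a) = 2" using pr
    by (simp add: primes_dvd_imp_eq)
  then have "of_nat 2 = (0::'a)" using of_nat_CHAR[where 'a='a] by simp
  then show ?thesis by simp
qed

lemma power_card_same:
  fixes x :: "'a::{field,finite}"
  shows "x ^ CARD('a) = x"
proof (cases "x = 0")
  case False
  have "x * (\<Prod>y\<in>UNIV-{0}. x * y) = x * x ^ (card (UNIV :: 'a set) - 1) * \<Prod>(UNIV-{0})"
    by (simp add: prod.distrib mult_ac)
  also have "x * x ^ (card (UNIV :: 'a set) - 1) = x ^ Suc (card (UNIV :: 'a set) - 1)"
    by (subst power_Suc) auto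
  also have "Suc (card (UNIV :: 'a set) - 1) = card (UNIV :: 'a set)"
    using finite_UNIV_card_ge_0[where ?'a = 'a] by simp
  also have "(\<Prod>y\<in>UNIV-{0}. x * y) = (\<Prod>y\<in>UNIV-{0}. y)"
    by (rule prod.reindex_bij_witness[of _ "\<lambda>y. y / x" "\<lambda>y. x * y"]) (use False in auto)
  finally show ?thesis
    by simp
qed (use finite_UNIV_card_ge_0[where ?'a = 'a] in auto)

lemma frob_add:
  fixes x y :: "'a::field"
  assumes "(2::'a) = 0"
  shows "(x + y) ^ (2 ^ i) = x ^ (2 ^ i) + y ^ (2 ^ i)"
proof (induction i)
  case 0 then show ?case by simp
next
  case (Suc i)
  have "(x + y) ^ (2 ^ Suc i) = ((x + y) ^ (2 ^ i))^2"
    by (simp add: power_mult[symmetric] mult.commute)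
  also have "\<dots> = (x ^ (2 ^ i) + y ^ (2 ^ i))^2" using Suc by simp
  also have "\<dots> = (x ^ (2 ^ i))^2 + (y ^ (2 ^ i))^2"
    by (simp add: power2_sum assms)
  also have "\<dots> = x ^ (2 ^ Suc i) + y ^ (2 ^ Suc i)"
    by (simp add: power_mult[symmetric] mult.commute)
  finally show ?case .
qed

lemma frob_sum:
  fixes f :: "nat \<Rightarrow> 'a::field"
  assumes "(2::'a) = 0"
  shows "(\<Sum>i<m. f i) ^ 2 = (\<Sum>i<m. (f i)^2)"
  using frob_add[OF assms, where i=1] by (induction m) auto

lemma tr_add:
  fixes x y :: "'a::field"
  assumes "(2::'a) = 0"
  shows "abs_tr r (x + y) = abs_tr r x + abs_tr r y"
  unfolding abs_tr_def by (simp add: frob_add[OF assms] sum.distrib)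

lemma tr_sq:
  fixes x :: "'a::{field,finite}"
  assumes "CARD('a) = 2 ^ r"
  shows "abs_tr r (x ^ 2) = abs_tr r x"
proof -
  have "abs_tr r (x ^ 2) = (\<Sum>i<r. x ^ (2 ^ Suc i))"
    unfolding abs_tr_def by (simp add: power_mult[symmetric] mult.commute)
  also have "\<dots> = (\<Sum>i<Suc r. x ^ (2 ^ i)) - x ^ (2^0)"
    by (subst sum.lessThan_Suc_shift) simp
  also have "\<dots> = abs_tr r x + x ^ (2^r) - x"
    unfolding abs_tr_def by simp
  also have "x ^ (2^r) = x" using power_card_same[of x] assms by simp
  finally show ?thesis by simp
qed

lemma tr_pow:
  fixes x :: "'a::{field,finite}"
  assumes "CARD('a) = 2 ^ r"
  shows "abs_tr r (x ^ (2 ^ s)) = abs_tr r x"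
proof (induction s)
  case 0 then show ?case by simp
next
  case (Suc s)
  have "x ^ (2 ^ Suc s) = (x ^ (2 ^ s))^2"
    by (simp add: power_mult[symmetric] mult.commute)
  then show ?case using tr_sq[OF assms, of "x ^ (2 ^ s)"] Suc by simp
qed

lemma tr_01:
  fixes x :: "'a::{field,finite}"
  assumes "CARD('a) = 2 ^ r"
  shows "abs_tr r x = 0 \<or> abs_tr r x = 1"
proof -
  have t2: "(2::'a) = 0" by (rule two_eq_zero[OF assms])
  have "(abs_tr r x)^2 = abs_tr r (x^2)"
    unfolding abs_tr_def frob_sum[OF t2] by (simp add: power_mult[symmetric] mult.commute)
  also have "\<dots> = abs_tr r x" by (rule tr_sq[OF assms])
  finally have "abs_tr r x * (abs_tr r x - 1) = 0" by (simp add: power2_eq_square algebra_simps)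
  then show ?thesis by auto
qed

lemma tr_nonzero_exists:
  assumes "CARD('a::{field,finite}) = 2 ^ r" and "r \<ge> 1"
  shows "\<exists>x::'a. abs_tr r x \<noteq> 0"
proof (rule ccontr)
  assume H: "\<not> ?thesis"
  define p :: "'a poly" where "p = (\<Sum>i<r. Polynomial.monom 1 (2^i))"
  have ev: "poly p x = abs_tr r x" for x
    unfolding p_def abs_tr_def by (simp add: poly_sum poly_monom)
  have "Polynomial.coeff p (2^(r-1)) = (\<Sum>i<r. if 2^i = (2::nat)^(r-1) then 1 else 0)"
    unfolding p_def by (simp add: coeff_sum coeff_monom)
  also have "\<dots> = (\<Sum>i\<in>{r-1}. 1)"
    by (rule sum.mono_neutral_cong_right) (use assms(2) in auto)
  finally have "Polynomial.coeff p (2^(r-1)) = 1" by simp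
  then have pnz: "p \<noteq> 0" by auto
  have "Polynomial.degree p \<le> 2^(r-1)"
    unfolding p_def
    by (rule degree_sum_le) (auto intro!: order.trans[OF degree_monom_le] power_increasing)
  moreover have "card {x. poly p x = 0} \<le> Polynomial.degree p" by (rule card_poly_roots_bound[OF pnz])
  moreover have "{x. poly p x = 0} = (UNIV::'a set)" using H ev by auto
  ultimately have le: "CARD('a) \<le> 2^(r-1)" by simp
  have "(2::nat)^(r-1) < 2^r" using assms(2) by (intro power_strict_increasing) auto
  then show False using le assms(1) by simp
qed

lemma lam_add:
  fixes x y :: "'a::{field,finite}"
  assumes "CARD('a) = 2 ^ r"
  shows "lam r (x + y) = lam r x * lam r y"
proof -
  have t2: "(2::'a) = 0" by (rule two_eq_zero[OF assms])
  have "(1::'a) + 1 = 0" using t2 by simp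
  then show ?thesis
    unfolding lam_def tr_add[OF t2] using tr_01[OF assms, of x] tr_01[OF assms, of y]
    by auto
qed

lemma lam_sum_zero:
  fixes c :: "'a::{field,finite}"
  assumes "CARD('a) = 2 ^ r" and "r \<ge> 1" and "c \<noteq> 0"
  shows "(\<Sum>t\<in>UNIV. lam r (c * t)) = 0"
proof -
  obtain x0 :: 'a where x0: "abs_tr r x0 \<noteq> 0" using tr_nonzero_exists[OF assms(1,2)] by blast
  have "(\<Sum>t\<in>UNIV. lam r (c * t)) = (\<Sum>t\<in>UNIV. lam r (c * (t + x0 / c)))"
    by (rule sum.reindex_bij_witness[of _ "\<lambda>t. t + x0 / c" "\<lambda>t. t - x0 / c"]) auto
  also have "\<dots> = (\<Sum>t\<in>UNIV. lam r (c * t) * lam r x0)"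
    using assms(3) by (simp add: distrib_left lam_add[OF assms(1)])
  also have "\<dots> = - (\<Sum>t\<in>UNIV. lam r (c * t))"
    using x0 by (simp add: lam_def sum_negf)
  finally show ?thesis by simp
qed



definition upper :: "('n \<Rightarrow> nat) \<Rightarrow> 'a::zero^'n^'n \<Rightarrow> bool" where
  "upper ord g \<longleftrightarrow> (\<forall>i j. ord j < ord i \<longrightarrow> g$i$j = 0)"

definition bad :: "('n \<Rightarrow> nat) \<Rightarrow> 'a::zero^'n^'n \<Rightarrow> 'n \<Rightarrow> bool" where
  "bad ord g j \<longleftrightarrow> (\<exists>i. ord j < ord i \<and> g$i$j \<noteq> 0)"

definition colP :: "('n \<Rightarrow> nat) \<Rightarrow> 'a::zero^'n^'n \<Rightarrow> 'n \<Rightarrow> bool" where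
  "colP ord g j \<longleftrightarrow> bad ord g j \<and> (\<forall>j'. bad ord g j' \<longrightarrow> ord j \<le> ord j')"

definition ca :: "('n \<Rightarrow> nat) \<Rightarrow> 'a::zero^'n^'n \<Rightarrow> 'n" where
  "ca ord g = (SOME j. colP ord g j)"

definition rb :: "('n \<Rightarrow> nat) \<Rightarrow> 'a::zero^'n^'n \<Rightarrow> 'n" where
  "rb ord g = (SOME i. ord (ca ord g) < ord i \<and> g$i$(ca ord g) \<noteq> 0)"

definition Tm :: "('n \<Rightarrow> nat) \<Rightarrow> 'a::comm_ring_1 \<Rightarrow> 'a^'n^'n \<Rightarrow> 'a^'n^'n" where
  "Tm ord t g = (\<chi> i j. g$i$j + (if j = rb ord g then t * g$i$(ca ord g) else 0))"

lemma not_upper_bad: "\<not> upper ord g \<Longrightarrow> \<exists>j. bad ord g j"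
  unfolding upper_def bad_def by blast

lemma colP_ex: "\<not> upper ord g \<Longrightarrow> \<exists>j. colP ord g j"
proof -
  assume "\<not> upper ord g"
  then obtain j0 where "bad ord g j0" using not_upper_bad by blast
  from ex_has_least_nat[of "bad ord g" j0 ord, OF this] show ?thesis
    unfolding colP_def by blast
qed

lemma colP_unique: "inj ord \<Longrightarrow> colP ord g j1 \<Longrightarrow> colP ord g j2 \<Longrightarrow> j1 = j2"
  unfolding colP_def by (meson antisym injD)

lemma ca_colP: "\<not> upper ord g \<Longrightarrow> colP ord g (ca ord g)"
  unfolding ca_def using colP_ex by (metis someI_ex)

lemma rb_prop:
  assumes "\<not> upper ord g"
  shows "ord (ca ord g) < ord (rb ord g) \<and> g$(rb ord g)$(ca ord g) \<noteq> 0"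
proof -
  have "bad ord g (ca ord g)" using ca_colP[OF assms] unfolding colP_def by blast
  then have "\<exists>i. ord (ca ord g) < ord i \<and> g$i$(ca ord g) \<noteq> 0" unfolding bad_def .
  then show ?thesis unfolding rb_def by (rule someI_ex)
qed

lemma Tm_other: "j \<noteq> rb ord g \<Longrightarrow> Tm ord t g $ i $ j = g $ i $ j"
  unfolding Tm_def by simp

lemma ca_Tm:
  assumes inj: "inj ord" and nu: "\<not> upper ord g"
  shows "ca ord (Tm ord t g) = ca ord g"
proof -
  let ?a = "ca ord g" and ?b = "rb ord g"
  have P: "colP ord g ?a" by (rule ca_colP[OF nu])
  have ab: "ord ?a < ord ?b" using rb_prop[OF nu] by blast
  have colsame: "Tm ord t g $ i $ j = g $ i $ j" if "ord j \<le> ord ?a" for i j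
    using ab that by (intro Tm_other) auto
  have badsame: "bad ord (Tm ord t g) j = bad ord g j" if "ord j \<le> ord ?a" for j
    unfolding bad_def using colsame[OF that] by simp
  have "colP ord (Tm ord t g) ?a"
    unfolding colP_def
  proof (intro conjI allI impI)
    show "bad ord (Tm ord t g) ?a" using badsame[of ?a] P unfolding colP_def by simp
  next
    fix j' assume "bad ord (Tm ord t g) j'"
    show "ord ?a \<le> ord j'"
    proof (rule ccontr)
      assume "\<not> ord ?a \<le> ord j'"
      then have "ord j' \<le> ord ?a" by simp
      with badsame \<open>bad ord (Tm ord t g) j'\<close> have "bad ord g j'" by simp
      with P \<open>\<not> ord ?a \<le> ord j'\<close> show False unfolding colP_def by blast
    qed
  qed
  moreover have "\<not> upper ord (Tm ord t g)"
    using \<open>colP ord (Tm ord t g) ?a\<close> unfolding colP_def bad_def upper_def by blast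
  ultimately show ?thesis using colP_unique[OF inj] ca_colP by blast
qed

lemma rb_Tm:
  assumes inj: "inj ord" and nu: "\<not> upper ord g"
  shows "rb ord (Tm ord t g) = rb ord g"
proof -
  have ab: "ord (ca ord g) < ord (rb ord g)" using rb_prop[OF nu] by blast
  have "Tm ord t g $ i $ (ca ord g) = g $ i $ (ca ord g)" for i
    using ab by (intro Tm_other) auto
  then show ?thesis unfolding rb_def ca_Tm[OF assms] by simp
qed

lemma Tm_not_upper:
  assumes inj: "inj ord" and nu: "\<not> upper ord g"
  shows "\<not> upper ord (Tm ord t g)"
proof -
  have ab: "ord (ca ord g) < ord (rb ord g)" and nz: "g$(rb ord g)$(ca ord g) \<noteq> 0"
    using rb_prop[OF nu] by blast+
  have "Tm ord t g $ (rb ord g) $ (ca ord g) = g $ (rb ord g) $ (ca ord g)"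
    using ab by (intro Tm_other) auto
  then have "Tm ord t g $ (rb ord g) $ (ca ord g) \<noteq> 0" using nz by simp
  then show ?thesis using ab unfolding upper_def by blast
qed

lemma Tm_inv:
  assumes inj: "inj ord" and nu: "\<not> upper ord g"
  shows "Tm ord (-t) (Tm ord t g) = g"
proof -
  have ab: "ord (ca ord g) < ord (rb ord g)" using rb_prop[OF nu] by blast
  have c: "Tm ord t g $ i $ (ca ord g) = g $ i $ (ca ord g)" for i
    using ab by (intro Tm_other) auto
  have "Tm ord (-t) (Tm ord t g) $ i $ j = g $ i $ j" for i j
  proof -
    have "Tm ord (-t) (Tm ord t g) $ i $ j = Tm ord t g $ i $ j +
        (if j = rb ord g then -t * Tm ord t g $ i $ (ca ord g) else 0)"
      by (subst Tm_def) (simp only: vec_lambda_beta ca_Tm[OF assms] rb_Tm[OF assms])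
    also have "\<dots> = g $ i $ j" unfolding c by (simp add: Tm_def)
    finally show ?thesis .
  qed
  then show ?thesis unfolding vec_eq_iff by simp
qed

lemma Tm_det:
  fixes g :: "'a::comm_ring_1^'n^'n"
  assumes nu: "\<not> upper ord g"
  shows "det (Tm ord t g) = det g"
proof -
  let ?a = "ca ord g" and ?b = "rb ord g"
  have ab: "?b \<noteq> ?a" using rb_prop[OF nu] by auto
  have "Tm ord t g = transpose (\<chi> k. if k = ?b then row ?b (transpose g) + t *s row ?a (transpose g)
                                   else row k (transpose g))"
    unfolding vec_eq_iff Tm_def by (simp add: transpose_def row_def)
  then have "det (Tm ord t g) = det (\<chi> k. if k = ?b then row ?b (transpose g) + t *s row ?a (transpose g)
                                   else row k (transpose g))" by simp
  also have "\<dots> = det (transpose g)" by (rule det_row_operation[OF ab])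
  finally show ?thesis by simp
qed

lemma Tm_trace:
  fixes g :: "'a::comm_ring_1^'n^'n"
  shows "trace (Tm ord t g) = trace g + t * g $ (rb ord g) $ (ca ord g)"
  unfolding trace_def Tm_def by (simp add: sum.distrib)

lemma cancel_sum:
  fixes \<psi> :: "'a::{field,finite} \<Rightarrow> int" and ord :: "'n::finite \<Rightarrow> nat"
  assumes psi_add: "\<And>x y. \<psi> (x + y) = \<psi> x * \<psi> y"
    and psi_sum: "\<And>c. c \<noteq> 0 \<Longrightarrow> (\<Sum>t\<in>UNIV. \<psi> (t * c)) = 0"
    and inj: "inj ord"
  shows "(\<Sum>g\<in>{g::'a^'n^'n. det g = d}. \<psi> (trace g))
       = (\<Sum>g\<in>{g. det g = d \<and> upper ord g}. \<psi> (trace g))"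
proof -
  define X where "X = {g::'a^'n^'n. det g = d \<and> \<not> upper ord g}"
  have split: "(\<Sum>g\<in>{g::'a^'n^'n. det g = d}. \<psi> (trace g))
      = (\<Sum>g\<in>{g. det g = d \<and> upper ord g}. \<psi> (trace g)) + (\<Sum>g\<in>X. \<psi> (trace g))"
  proof -
    have "(\<Sum>g\<in>{g::'a^'n^'n. det g = d}. \<psi> (trace g))
       = (\<Sum>g\<in>{g::'a^'n^'n. det g = d} \<inter> {g. upper ord g}. \<psi> (trace g))
        + (\<Sum>g\<in>{g::'a^'n^'n. det g = d} - {g. upper ord g}. \<psi> (trace g))"
      by (rule sum.Int_Diff) simp
    moreover have "{g::'a^'n^'n. det g = d} \<inter> {g. upper ord g} = {g. det g = d \<and> upper ord g}" by auto
    moreover have "{g::'a^'n^'n. det g = d} - {g. upper ord g} = X" unfolding X_def by auto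
    ultimately show ?thesis by simp
  qed
  define S where "S = (\<Sum>g\<in>X. \<psi> (trace g))"
  have shift: "S = (\<Sum>g\<in>X. \<psi> (trace g) * \<psi> (t * g $ (rb ord g) $ (ca ord g)))" for t
  proof -
    have "(\<Sum>g\<in>X. \<psi> (trace (Tm ord t g))) = S"
      unfolding S_def
    proof (rule sum.reindex_bij_witness[of _ "Tm ord (-t)" "Tm ord t"])
      fix g assume "g \<in> X"
      then have nu: "\<not> upper ord g" and dg: "det g = d" unfolding X_def by auto
      show "Tm ord (-t) (Tm ord t g) = g" by (rule Tm_inv[OF inj nu])
      show "Tm ord t g \<in> X" using Tm_det[OF nu] Tm_not_upper[OF inj nu] dg unfolding X_def by auto
      show "\<psi> (trace (Tm ord t g)) = \<psi> (trace (Tm ord t g))" ..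
    next
      fix g assume "g \<in> X"
      then have nu: "\<not> upper ord g" and dg: "det g = d" unfolding X_def by auto
      have "Tm ord t (Tm ord (-t) g) = Tm ord (-(-t)) (Tm ord (-t) g)" by simp
      also have "\<dots> = g" by (rule Tm_inv[OF inj nu])
      finally show "Tm ord t (Tm ord (-t) g) = g" .
      show "Tm ord (-t) g \<in> X" using Tm_det[OF nu] Tm_not_upper[OF inj nu] dg unfolding X_def by auto
    qed
    then show ?thesis unfolding Tm_trace psi_add by simp
  qed
  have "of_nat CARD('a) * S = (\<Sum>t\<in>(UNIV::'a set). S)" by simp
  also have "\<dots> = (\<Sum>t\<in>UNIV. \<Sum>g\<in>X. \<psi> (trace g) * \<psi> (t * g $ (rb ord g) $ (ca ord g)))"
    using shift by simp
  also have "\<dots> = (\<Sum>g\<in>X. \<psi> (trace g) * (\<Sum>t\<in>UNIV. \<psi> (t * g $ (rb ord g) $ (ca ord g))))"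
    by (subst sum.swap) (simp add: sum_distrib_left)
  also have "\<dots> = 0"
  proof (rule sum.neutral, intro ballI)
    fix g assume "g \<in> X"
    then have nu: "\<not> upper ord g" unfolding X_def by auto
    have "g $ (rb ord g) $ (ca ord g) \<noteq> 0" using rb_prop[OF nu] by blast
    then have "(\<Sum>t\<in>UNIV. \<psi> (t * (g $ (rb ord g) $ (ca ord g)))) = 0" by (rule psi_sum)
    then show "\<psi> (trace g) * (\<Sum>t\<in>UNIV. \<psi> (t * g $ (rb ord g) $ (ca ord g))) = 0"
      by (simp add: mult.assoc)
  qed
  finally have "S = 0" by simp
  then show ?thesis using split unfolding S_def by simp
qed



lemma perm_ord_id:
  fixes ord :: "'n::finite \<Rightarrow> nat"
  assumes p: "p permutes (UNIV::'n set)" and inj: "inj ord" and le: "\<And>i. ord i \<le> ord (p i)"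
  shows "p = id"
proof -
  have "(\<Sum>i\<in>UNIV. ord i) = (\<Sum>i\<in>UNIV. (ord \<circ> p) i)" by (rule sum.permute[OF p])
  then have "ord i = ord (p i)" for i
    using sum_mono_inv[of ord UNIV "ord \<circ> p" i] le by simp
  then show ?thesis using inj by (auto simp: injD fun_eq_iff)
qed

lemma det_upper:
  fixes g :: "'a::comm_ring_1^'n::finite^'n"
  assumes inj: "inj ord" and up: "upper ord g"
  shows "det g = (\<Prod>i\<in>UNIV. g$i$i)"
proof -
  have z: "(\<Prod>i\<in>UNIV. g$i$(p i)) = 0" if p: "p permutes UNIV" "p \<noteq> id" for p
  proof -
    obtain i where "\<not> ord i \<le> ord (p i)" using perm_ord_id[OF p(1) inj] p(2) by blast
    then have "g$i$(p i) = 0" using up unfolding upper_def by auto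
    then show ?thesis by (intro prod_zero) auto
  qed
  have "det g = (\<Sum>p\<in>{p. p permutes (UNIV::'n set)}. of_int (sign p) * (\<Prod>i\<in>UNIV. g$i$(p i)))"
    unfolding det_def ..
  also have "\<dots> = (\<Sum>p\<in>{id}. of_int (sign p) * (\<Prod>i\<in>UNIV. g$i$(p i)))"
    by (rule sum.mono_neutral_right) (auto simp: permutes_id z)
  finally show ?thesis by (simp add: sign_id)
qed

lemma card_pairs: "card {(u::nat,v). u < v \<and> v < n} = n choose 2"
proof (induction n)
  case 0 then show ?case by simp
next
  case (Suc n)
  have eq: "{(u::nat,v). u < v \<and> v < Suc n} = {(u,v). u < v \<and> v < n} \<union> (\<lambda>u. (u,n)) ` {..<n}"
    by auto
  have "card {(u::nat,v). u < v \<and> v < Suc n} = card {(u::nat,v). u < v \<and> v < n} + card ((\<lambda>u. (u,n)) ` {..<n})"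
    unfolding eq
    by (rule card_Un_disjoint) (auto intro: finite_subset[of _ "{..<n} \<times> {..<n}"])
  also have "card ((\<lambda>u. (u,n)) ` {..<n}) = n" by (subst card_image) (auto simp: inj_on_def)
  finally show ?case using Suc by (simp add: numeral_2_eq_2)
qed

lemma card_P:
  fixes ord :: "'n::finite \<Rightarrow> nat"
  assumes bij: "bij_betw ord UNIV {..<CARD('n)}"
  shows "card {(i::'n,j). ord i < ord j} = CARD('n) choose 2"
proof -
  have inj: "inj ord" using bij bij_betw_imp_inj_on by blast
  have im: "ord ` UNIV = {..<CARD('n)}" using bij bij_betw_imp_surj_on by blast
  have IM: "map_prod ord ord ` {(i::'n,j). ord i < ord j} = {(u,v). u < v \<and> v < CARD('n)}"
  proof
    show "map_prod ord ord ` {(i::'n,j). ord i < ord j} \<subseteq> {(u,v). u < v \<and> v < CARD('n)}"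
      using im by auto
  next
    show "{(u,v). u < v \<and> v < CARD('n)} \<subseteq> map_prod ord ord ` {(i::'n,j). ord i < ord j}"
    proof safe
      fix u v assume uv: "u < v" "v < CARD('n)"
      then obtain i j where "ord i = u" "ord j = v" using im
        by (metis imageE lessThan_iff order.strict_trans)
      then show "(u,v) \<in> map_prod ord ord ` {(i::'n,j). ord i < ord j}" using uv by force
    qed
  qed
  have "inj (map_prod ord ord)" using inj by (rule prod.inj_map[OF _ inj])
  then have "inj_on (map_prod ord ord) {(i::'n,j). ord i < ord j}" by (rule inj_on_subset) simp
  then have "card (map_prod ord ord ` {(i::'n,j). ord i < ord j}) = card {(i::'n,j). ord i < ord j}"
    by (rule card_image)
  then have "card {(i::'n,j). ord i < ord j} = card {(u,v). u < v \<and> v < CARD('n)}"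
    unfolding IM by simp
  then show ?thesis using card_pairs by simp
qed

lemma card_fib:
  fixes ord :: "'n::finite \<Rightarrow> nat" and y :: "'n \<Rightarrow> 'a::{zero,finite}"
  assumes inj: "inj ord"
  shows "card {g::'a^'n^'n. upper ord g \<and> (\<lambda>i. g$i$i) = y} = CARD('a) ^ card {(i::'n,j). ord i < ord j}"
proof -
  define P where "P = {(i::'n,j). ord i < ord j}"
  define A where "A = {g::'a^'n^'n. upper ord g \<and> (\<lambda>i. g$i$i) = y}"
  define F where "F = (\<lambda>g::'a^'n^'n. restrict (\<lambda>(i,j). g$i$j) P)"
  define G where "G = (\<lambda>h. (\<chi> i j. if ord i < ord j then h (i,j) else if i = j then y i else 0) :: 'a^'n^'n)"
  have tri: "ord i < ord j \<or> ord j < ord i \<or> i = j" for i j using inj by (metis injD linorder_neqE_nat)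
  have GF: "G (F g) = g" if "g \<in> A" for g
  proof -
    from that have up: "upper ord g" and dg: "\<And>i. g$i$i = y i" unfolding A_def by (auto simp: fun_eq_iff)
    have "G (F g) $ i $ j = g $ i $ j" for i j
    proof -
      consider "ord i < ord j" | "ord j < ord i" | "i = j" using tri by blast
      then show ?thesis
      proof cases
        case 1 then show ?thesis unfolding G_def F_def P_def by simp
      next
        case 2
        then have "g$i$j = 0" using up unfolding upper_def by blast
        moreover have "i \<noteq> j" using 2 by auto
        ultimately show ?thesis using 2 unfolding G_def F_def P_def by simp
      next
        case 3 then show ?thesis unfolding G_def F_def P_def using dg by simp
      qed
    qed
    then show ?thesis unfolding vec_eq_iff by simp
  qed
  have FG: "F (G h) = h" if "h \<in> PiE P (\<lambda>_. UNIV)" for h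
  proof
    fix x
    show "F (G h) x = h x"
    proof (cases "x \<in> P")
      case True
      then obtain i j where x: "x = (i,j)" and o: "ord i < ord j" unfolding P_def by auto
      have "F (G h) x = G h $ i $ j" unfolding F_def using True x by simp
      also have "\<dots> = h x" unfolding G_def using o x by simp
      finally show ?thesis .
    next
      case False
      have "F (G h) x = undefined" unfolding F_def using False by simp
      also have "\<dots> = h x" using PiE_arb[OF that False] by simp
      finally show ?thesis .
    qed
  qed
  have GA: "G h \<in> A" for h
  proof -
    have "upper ord (G h)" unfolding upper_def G_def by auto
    moreover have "(\<lambda>i. G h $ i $ i) = y" unfolding G_def by simp
    ultimately show ?thesis unfolding A_def by simp
  qed
  have "bij_betw F A (PiE P (\<lambda>_. UNIV))"
    by (rule bij_betw_byWitness[where f'=G]) (use GF FG GA in \<open>auto simp: F_def\<close>)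
  then have "card A = card (PiE P (\<lambda>_. UNIV::'a set))" by (rule bij_betw_same_card)
  also have "\<dots> = CARD('a) ^ card P" by (simp add: card_PiE)
  finally show ?thesis unfolding A_def P_def .
qed

lemma upper_sum:
  fixes f :: "('n::finite \<Rightarrow> 'a::{field,finite}) \<Rightarrow> int" and ord :: "'n \<Rightarrow> nat"
  assumes bij: "bij_betw ord UNIV {..<CARD('n)}"
  shows "(\<Sum>g\<in>{g::'a^'n^'n. det g = d \<and> upper ord g}. f (\<lambda>i. g$i$i))
       = int CARD('a) ^ (CARD('n) choose 2) * (\<Sum>y\<in>{y. (\<Prod>i\<in>UNIV. y i) = d}. f y)"
proof -
  have inj: "inj ord" using bij bij_betw_imp_inj_on by blast
  let ?S = "{g::'a^'n^'n. det g = d \<and> upper ord g}"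
  let ?R = "{y::'n\<Rightarrow>'a. (\<Prod>i\<in>UNIV. y i) = d}"
  have "(\<Sum>g\<in>?S. f (\<lambda>i. g$i$i)) = (\<Sum>y\<in>?R. of_nat (card {g\<in>?S. (\<lambda>i. g$i$i) = y}) * f y)"
  proof (rule sum_fun_comp)
    show "finite ?S" by simp
    show "finite ?R" by simp
    show "(\<lambda>g. \<lambda>i. g$i$i) ` ?S \<subseteq> ?R"
    proof
      fix y assume "y \<in> (\<lambda>g. \<lambda>i. g$i$i) ` ?S"
      then obtain g where "g \<in> ?S" "y = (\<lambda>i. g$i$i)" by blast
      then show "y \<in> ?R" using det_upper[OF inj, of g] by simp
    qed
  qed
  also have "\<dots> = (\<Sum>y\<in>?R. int CARD('a) ^ (CARD('n) choose 2) * f y)"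
  proof (rule sum.cong[OF refl])
    fix y assume y: "y \<in> ?R"
    have "{g\<in>?S. (\<lambda>i. g$i$i) = y} = {g::'a^'n^'n. upper ord g \<and> (\<lambda>i. g$i$i) = y}"
    proof (rule Collect_cong)
      fix g :: "'a^'n^'n"
      show "(g \<in> ?S \<and> (\<lambda>i. g$i$i) = y) = (upper ord g \<and> (\<lambda>i. g$i$i) = y)"
        using y det_upper[OF inj, of g] by auto
    qed
    then show "of_nat (card {g\<in>?S. (\<lambda>i. g$i$i) = y}) * f y = int CARD('a) ^ (CARD('n) choose 2) * f y"
      using card_fib[OF inj, of y] card_P[OF bij] by simp
  qed
  finally show ?thesis by (simp only: sum_distrib_left)
qed



lemma det_nz_rows:
  fixes g :: "'a::field^'n::finite^'n"
  shows "det g \<noteq> 0 \<longleftrightarrow> (\<forall>c. (\<Sum>i\<in>UNIV. c i *s row i g) = 0 \<longrightarrow> (\<forall>i. c i = 0))"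
  by (simp add: invertible_det_nz[symmetric] invertible_right_inverse matrix_right_invertible_independent_rows)

definition indep :: "nat \<Rightarrow> (nat \<Rightarrow> 'a::field^'n) \<Rightarrow> bool" where
  "indep k f \<longleftrightarrow> (\<forall>c. (\<Sum>i<k. c i *s f i) = 0 \<longrightarrow> (\<forall>i<k. c i = 0))"

definition Lset :: "nat \<Rightarrow> (nat \<Rightarrow> 'a::field^'n) set" where
  "Lset k = {f \<in> {..<k} \<rightarrow>\<^sub>E UNIV. indep k f}"

definition Vspan :: "nat \<Rightarrow> (nat \<Rightarrow> 'a::field^'n) \<Rightarrow> ('a^'n) set" where
  "Vspan k f = (\<lambda>c. \<Sum>i<k. c i *s f i) ` ({..<k} \<rightarrow>\<^sub>E UNIV)"

lemma card_Vspan: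
  fixes f :: "nat \<Rightarrow> 'a::{field,finite}^'n::finite"
  assumes "indep k f"
  shows "card (Vspan k f) = CARD('a) ^ k"
proof -
  have "inj_on (\<lambda>c. \<Sum>i<k. c i *s f i) ({..<k} \<rightarrow>\<^sub>E UNIV)"
  proof (rule inj_onI)
    fix c d assume c: "c \<in> {..<k} \<rightarrow>\<^sub>E (UNIV::'a set)" and d: "d \<in> {..<k} \<rightarrow>\<^sub>E (UNIV::'a set)"
      and eq: "(\<Sum>i<k. c i *s f i) = (\<Sum>i<k. d i *s f i)"
    have "(\<Sum>i<k. (c i - d i) *s f i) = 0"
      using eq by (simp add: vector_sub_rdistrib sum_subtractf)
    moreover have I: "\<And>c. (\<Sum>i<k. c i *s f i) = 0 \<Longrightarrow> \<forall>i<k. c i = 0" using assms unfolding indep_def by blast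
    ultimately have "\<forall>i<k. c i - d i = 0" using I[of "\<lambda>i. c i - d i"] by blast
    then show "c = d" using c d by (intro PiE_ext[OF c d]) auto
  qed
  then have "card (Vspan k f) = card ({..<k} \<rightarrow>\<^sub>E (UNIV::'a set))"
    unfolding Vspan_def by (rule card_image)
  also have "\<dots> = CARD('a) ^ k" by (simp add: card_PiE)
  finally show ?thesis .
qed

lemma indep_Suc:
  fixes f :: "nat \<Rightarrow> 'a::field^'n::finite"
  shows "indep (Suc k) f \<longleftrightarrow> indep k f \<and> f k \<notin> Vspan k f"
proof
  assume H: "indep (Suc k) f"
  have "indep k f" unfolding indep_def
  proof (intro allI impI)
    fix c i assume s: "(\<Sum>i<k. c i *s f i) = 0" and ik: "i < k"
    have "(\<Sum>j<Suc k. (c(k:=0)) j *s f j) = 0"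
      using s by (simp add: lessThan_Suc sum.insert)
    moreover have I: "\<And>c. (\<Sum>i<Suc k. c i *s f i) = 0 \<Longrightarrow> \<forall>i<Suc k. c i = 0" using H unfolding indep_def by blast
    ultimately have "\<forall>j<Suc k. (c(k:=0)) j = 0" by blast
    then show "c i = 0" using ik by (metis fun_upd_other less_Suc_eq nat_neq_iff)
  qed
  moreover have "f k \<notin> Vspan k f"
  proof
    assume "f k \<in> Vspan k f"
    then obtain c where c: "f k = (\<Sum>i<k. c i *s f i)" unfolding Vspan_def by blast
    have "(\<Sum>j<Suc k. (c(k:=-1)) j *s f j) = 0"
      using c by (simp add: lessThan_Suc)
    moreover have I: "\<And>c. (\<Sum>i<Suc k. c i *s f i) = 0 \<Longrightarrow> \<forall>i<Suc k. c i = 0" using H unfolding indep_def by blast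
    ultimately have "\<forall>j<Suc k. (c(k:=-1)) j = 0" by blast
    then have "(c(k:=-1)) k = 0" by blast
    then show False by simp
  qed
  ultimately show "indep k f \<and> f k \<notin> Vspan k f" ..
next
  assume H: "indep k f \<and> f k \<notin> Vspan k f"
  show "indep (Suc k) f" unfolding indep_def
  proof (intro allI impI)
    fix c i assume s: "(\<Sum>i<Suc k. c i *s f i) = 0" and ik: "i < Suc k"
    have s': "(\<Sum>i<k. c i *s f i) + c k *s f k = 0" using s by (simp add: add.commute)
    have ck: "c k = 0"
    proof (rule ccontr)
      assume nz: "c k \<noteq> 0"
      have "f k = (\<Sum>i<k. (- c i / c k) *s f i)"
      proof -
        have "c k *s f k = - (\<Sum>i<k. c i *s f i)" using s' by (simp add: eq_neg_iff_add_eq_0 add.commute)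
        then have "f k = (1 / c k) *s (- (\<Sum>i<k. c i *s f i))" using nz
          by (metis (no_types, lifting) divide_self_if nonzero_divide_eq_eq vector_smult_assoc vector_smult_lid)
        also have "\<dots> = (\<Sum>i<k. (- c i / c k) *s f i)"
          by (simp add: vec.scale_sum_right vec.scale_minus_right vector_smult_assoc divide_inverse mult.commute sum_negf)
        finally show ?thesis .
      qed
      also have "\<dots> = (\<Sum>i<k. (restrict (\<lambda>i. - c i / c k) {..<k}) i *s f i)" by simp
      finally have "f k \<in> Vspan k f" unfolding Vspan_def by (intro image_eqI[where x="restrict (\<lambda>i. - c i / c k) {..<k}"]) auto
      then show False using H by blast
    qed
    then have "(\<Sum>i<k. c i *s f i) = 0" using s' by simp
    then have "\<forall>i<k. c i = 0" using H unfolding indep_def by blast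
    then show "c i = 0" using ck ik less_Suc_eq by auto
  qed
qed

lemma indep_cong: assumes "\<And>i. i < k \<Longrightarrow> f i = g i" shows "indep k f = indep k g"
proof -
  have "\<And>c. (\<Sum>i<k. c i *s f i) = (\<Sum>i<k. c i *s g i)" using assms by (intro sum.cong) auto
  then show ?thesis by (simp add: indep_def)
qed

lemma Vspan_cong: assumes "\<And>i. i < k \<Longrightarrow> f i = g i" shows "Vspan k f = Vspan k g"
proof -
  have "\<And>c. (\<Sum>i<k. c i *s f i) = (\<Sum>i<k. c i *s g i)" using assms by (intro sum.cong) auto
  then show ?thesis by (simp add: Vspan_def)
qed

lemma card_Lset:
  "card (Lset k :: (nat \<Rightarrow> 'a::{field,finite}^'n::finite) set)
     = (\<Prod>i<k. CARD('a) ^ CARD('n) - CARD('a) ^ i)"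
proof (induction k)
  case 0
  have "Lset 0 = {(\<lambda>_. undefined) :: nat \<Rightarrow> 'a^'n}" unfolding Lset_def indep_def by auto
  then show ?case by (simp only: card.empty card_insert_disjoint finite.emptyI empty_iff not_False_eq_True lessThan_0 prod.empty One_nat_def)
next
  case (Suc k)
  let ?L = "Lset k :: (nat \<Rightarrow> 'a^'n) set"
  let ?B = "\<lambda>f. UNIV - Vspan k f"
  let ?L1 = "Lset (Suc k) :: (nat \<Rightarrow> 'a^'n) set"
  define F where "F = (\<lambda>h::nat \<Rightarrow> 'a^'n. (restrict h {..<k}, h k))"
  define G where "G = (\<lambda>(f::nat \<Rightarrow> 'a^'n, v). f(k:=v))"
  have "bij_betw F (?L1) (Sigma ?L ?B)"
  proof (rule bij_betw_byWitness[where f'=G])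
    show "\<forall>a\<in>?L1. G (F a) = a"
    proof
      fix h assume h: "h \<in> ?L1"
      show "G (F h) = h"
      proof
        fix x
        have hP: "h \<in> {..<Suc k} \<rightarrow>\<^sub>E UNIV" using h unfolding Lset_def by blast
        have GF: "G (F h) = (restrict h {..<k})(k := h k)" unfolding F_def G_def by simp
        show "G (F h) x = h x"
        proof (cases "x < k")
          case True then show ?thesis unfolding GF by simp
        next
          case False
          show ?thesis
          proof (cases "x = k")
            case True then show ?thesis unfolding GF by simp
          next
            case False2: False
            then have "x \<notin> {..<Suc k}" using False by simp
            then have "h x = undefined" by (rule PiE_arb[OF hP])
            then show ?thesis unfolding GF using False False2 by simp
          qed
        qed
      qed
    qed
    show "\<forall>a'\<in>Sigma ?L ?B. F (G a') = a'"
    proof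
      fix p assume p: "p \<in> Sigma ?L ?B"
      obtain f v where pv: "p = (f, v)" by (cases p)
      with p have f: "f \<in> ?L" by auto
      have "restrict (f(k:=v)) {..<k} = f"
      proof
        fix x
        have fP: "f \<in> {..<k} \<rightarrow>\<^sub>E UNIV" using f unfolding Lset_def by blast
        show "restrict (f(k:=v)) {..<k} x = f x"
        proof (cases "x < k")
          case True then show ?thesis by simp
        next
          case False
          then have "x \<notin> {..<k}" by simp
          then have "f x = undefined" by (rule PiE_arb[OF fP])
          then show ?thesis using False by simp
        qed
      qed
      then show "F (G p) = p" unfolding pv F_def G_def by simp
    qed
    show "F ` ?L1 \<subseteq> Sigma ?L ?B"
    proof
      fix y assume "y \<in> F ` ?L1"
      then obtain h where h: "h \<in> ?L1" and y: "y = F h" by blast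
      have ind: "indep (Suc k) h" using h unfolding Lset_def by blast
      then have i1: "indep k h" and i2: "h k \<notin> Vspan k h" using indep_Suc by blast+
      have "indep k (restrict h {..<k})" using i1 by (subst indep_cong[where g=h]) auto
      moreover have "Vspan k (restrict h {..<k}) = Vspan k h" by (rule Vspan_cong) auto
      ultimately show "y \<in> Sigma ?L ?B" unfolding y F_def Lset_def using i2 by auto
    qed
    show "G ` Sigma ?L ?B \<subseteq> ?L1"
    proof
      fix y assume "y \<in> G ` Sigma ?L ?B"
      then obtain f v where fv: "f \<in> ?L" "v \<notin> Vspan k f" and y: "y = f(k:=v)" unfolding G_def by auto
      have f: "f \<in> {..<k} \<rightarrow>\<^sub>E UNIV" "indep k f" using fv unfolding Lset_def by auto
      have "indep k (f(k:=v))" using f(2) by (subst indep_cong[where g=f]) auto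
      moreover have "Vspan k (f(k:=v)) = Vspan k f" by (rule Vspan_cong) auto
      ultimately have "indep (Suc k) (f(k:=v))" using fv(2) by (simp only: indep_Suc fun_upd_same) simp
      moreover have "f(k:=v) \<in> {..<Suc k} \<rightarrow>\<^sub>E UNIV" using f(1) by (auto simp: PiE_def extensional_def)
      ultimately show "y \<in> ?L1" unfolding y Lset_def by simp
    qed
  qed
  then have "card (Lset (Suc k) :: (nat \<Rightarrow> 'a^'n) set) = card (Sigma ?L ?B)" by (rule bij_betw_same_card)
  also have "\<dots> = (\<Sum>f\<in>?L. card (?B f))" proof (rule card_SigmaI)
    have "?L \<subseteq> {..<k} \<rightarrow>\<^sub>E UNIV" unfolding Lset_def by blast
    moreover have "finite ({..<k} \<rightarrow>\<^sub>E (UNIV::('a^'n) set))" by (rule finite_PiE) auto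
    ultimately show "finite ?L" by (rule finite_subset)
  qed auto
  also have "\<dots> = (\<Sum>f\<in>?L. CARD('a) ^ CARD('n) - CARD('a) ^ k)"
  proof (rule sum.cong[OF refl])
    fix f assume "f \<in> ?L"
    then have "indep k f" unfolding Lset_def by blast
    then have "card (Vspan k f) = CARD('a) ^ k" by (rule card_Vspan)
    then show "card (?B f) = CARD('a) ^ CARD('n) - CARD('a) ^ k"
      by (simp add: card_Diff_subset)
  qed
  also have "\<dots> = card ?L * (CARD('a) ^ CARD('n) - CARD('a) ^ k)" by simp
  finally show ?case using Suc by simp
qed

lemma card_GL:
  fixes ord :: "'n::finite \<Rightarrow> nat"
  assumes bij: "bij_betw ord UNIV {..<CARD('n)}"
  shows "card {g::'a::{field,finite}^'n^'n. det g \<noteq> 0} = card (Lset CARD('n) :: (nat \<Rightarrow> 'a^'n) set)"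
proof -
  let ?n = "CARD('n)"
  define e where "e = inv_into UNIV ord"
  have oe: "ord (e i) = i" if "i < ?n" for i
    using that bij unfolding e_def by (metis bij_betw_def f_inv_into_f lessThan_iff)
  have eo: "e (ord j) = j" for j
    using bij unfolding e_def by (metis bij_betw_def inv_into_f_f UNIV_I)
  have reidx: "(\<Sum>i<?n. c i *s row (e i) g) = (\<Sum>j\<in>UNIV. c (ord j) *s row j g)"
    for c and g :: "'a^'n^'n"
    using sum.reindex_bij_betw[OF bij, of "\<lambda>i. c i *s row (e i) g"] by (simp add: eo)
  have key: "indep ?n (\<lambda>i. row (e i) g) \<longleftrightarrow> det g \<noteq> 0" for g :: "'a^'n^'n"
  proof
    assume H: "indep ?n (\<lambda>i. row (e i) g)"
    show "det g \<noteq> 0" unfolding det_nz_rows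
    proof (intro allI impI)
      fix c' :: "'n \<Rightarrow> 'a" and j assume s: "(\<Sum>j\<in>UNIV. c' j *s row j g) = 0"
      have "(\<Sum>i<?n. (c' \<circ> e) i *s row (e i) g) = 0" unfolding reidx using s by (simp add: eo)
      moreover have I: "\<And>c. (\<Sum>i<?n. c i *s row (e i) g) = 0 \<Longrightarrow> \<forall>i<?n. c i = 0"
        using H unfolding indep_def by blast
      ultimately have "\<forall>i<?n. (c' \<circ> e) i = 0" by blast
      moreover have "ord j < ?n" using bij bij_betw_apply by fastforce
      ultimately show "c' j = 0" using eo by (metis comp_apply)
    qed
  next
    assume H: "det g \<noteq> 0"
    show "indep ?n (\<lambda>i. row (e i) g)" unfolding indep_def
    proof (intro allI impI)
      fix c i assume s: "(\<Sum>i<?n. c i *s row (e i) g) = 0" and i: "i < ?n"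
      have "(\<Sum>j\<in>UNIV. (c \<circ> ord) j *s row j g) = 0" using s unfolding reidx by simp
      moreover have I: "\<And>c. (\<Sum>j\<in>UNIV. c j *s row j g) = 0 \<Longrightarrow> \<forall>j. c j = 0"
        using H unfolding det_nz_rows by blast
      ultimately have "\<forall>j. (c \<circ> ord) j = 0" by blast
      then show "c i = 0" using oe[OF i] by (metis comp_apply)
    qed
  qed
  define F where "F = (\<lambda>g::'a^'n^'n. restrict (\<lambda>i. row (e i) g) {..<?n})"
  define G where "G = (\<lambda>f::nat \<Rightarrow> 'a^'n. (\<chi> j. f (ord j)) :: 'a^'n^'n)"
  have "bij_betw F {g::'a^'n^'n. det g \<noteq> 0} (Lset ?n)"
  proof (rule bij_betw_byWitness[where f'=G])
    have ord_lt: "ord j < ?n" for j using bij bij_betw_apply by fastforce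
    show "\<forall>a\<in>{g::'a^'n^'n. det g \<noteq> 0}. G (F a) = a"
      unfolding F_def G_def by (auto simp: vec_eq_iff row_def eo ord_lt)
    show "\<forall>a'\<in>Lset ?n. F (G a') = a'"
    proof
      fix f assume f: "f \<in> (Lset ?n :: (nat \<Rightarrow> 'a^'n) set)"
      have fP: "f \<in> {..<?n} \<rightarrow>\<^sub>E UNIV" using f unfolding Lset_def by blast
      show "F (G f) = f"
      proof
        fix x show "F (G f) x = f x"
        proof (cases "x < ?n")
          case True then show ?thesis unfolding F_def G_def by (simp add: row_def oe vec_eq_iff)
        next
          case False
          then have "x \<notin> {..<?n}" by simp
          then have "f x = undefined" by (rule PiE_arb[OF fP])
          then show ?thesis using False unfolding F_def by simp
        qed
      qed
    qed
    show "F ` {g::'a^'n^'n. det g \<noteq> 0} \<subseteq> Lset ?n"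
    proof
      fix y assume "y \<in> F ` {g::'a^'n^'n. det g \<noteq> 0}"
      then obtain g :: "'a^'n^'n" where g: "det g \<noteq> 0" and y: "y = F g" by blast
      have "indep ?n (\<lambda>i. row (e i) g)" using key g by blast
      then have "indep ?n y" unfolding y F_def by (subst indep_cong[where g="\<lambda>i. row (e i) g"]) auto
      then show "y \<in> Lset ?n" unfolding Lset_def y F_def by auto
    qed
    show "G ` Lset ?n \<subseteq> {g::'a^'n^'n. det g \<noteq> 0}"
    proof
      fix y assume "y \<in> G ` (Lset ?n :: (nat \<Rightarrow> 'a^'n) set)"
      then obtain f :: "nat \<Rightarrow> 'a^'n" where f: "f \<in> Lset ?n" and y: "y = G f" by blast
      have "indep ?n f" using f unfolding Lset_def by blast
      moreover have "row (e i) y = f i" if "i < ?n" for i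
        unfolding y G_def by (simp add: row_def oe[OF that] vec_eq_iff)
      ultimately have "indep ?n (\<lambda>i. row (e i) y)" by (subst indep_cong[where g=f]) auto
      then show "y \<in> {g. det g \<noteq> 0}" using key by blast
    qed
  qed
  then show ?thesis by (rule bij_betw_same_card)
qed

lemma card_det_eq:
  fixes d :: "'a::{field,finite}"
  assumes "d \<noteq> 0"
  shows "card {g::'a^'n::finite^'n. det g = d} = card {g::'a^'n^'n. det g = 1}"
proof -
  define S where "S = (\<lambda>(c::'a) (g::'a^'n^'n). (\<chi> i. if i = undefined then c *s row undefined g else row i g) :: 'a^'n^'n)"
  have dS: "det (S c g) = c * det g" for c g
  proof -
    have "det (S c g) = c * det ((\<chi> i. if i = undefined then row undefined g else row i g) :: 'a^'n^'n)"
      unfolding S_def by (rule det_row_mul)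
    also have "(\<chi> i. if i = undefined then row undefined g else row i g) = g"
      by (simp add: vec_eq_iff row_def)
    finally show ?thesis .
  qed
  have SS: "S c' (S c g) = S (c' * c) g" for c c' g
    unfolding S_def by (simp add: vec_eq_iff row_def)
  have S1: "S 1 g = g" for g unfolding S_def by (simp add: vec_eq_iff row_def)
  have "bij_betw (S (inverse d)) {g::'a^'n^'n. det g = d} {g. det g = 1}"
  proof (rule bij_betw_byWitness[where f'="S d"])
    show "\<forall>a\<in>{g::'a^'n^'n. det g = d}. S d (S (inverse d) a) = a" using assms by (simp add: SS S1)
    show "\<forall>a'\<in>{g::'a^'n^'n. det g = 1}. S (inverse d) (S d a') = a'" using assms by (simp add: SS S1)
    show "S (inverse d) ` {g::'a^'n^'n. det g = d} \<subseteq> {g. det g = 1}" using assms by (auto simp: dS)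
    show "S d ` {g::'a^'n^'n. det g = 1} \<subseteq> {g. det g = d}" by (auto simp: dS)
  qed
  then show ?thesis by (rule bij_betw_same_card)
qed

lemma card_GL_SL:
  "card {g::'a::{field,finite}^'n::finite^'n. det g \<noteq> 0} = (CARD('a) - 1) * card {g::'a^'n^'n. det g = 1}"
proof -
  have "{g::'a^'n^'n. det g \<noteq> 0} = (\<Union>d\<in>UNIV-{0}. {g. det g = d})" by auto
  then have "card {g::'a^'n^'n. det g \<noteq> 0} = (\<Sum>d\<in>UNIV-{0}. card {g::'a^'n^'n. det g = d})"
    by (simp only:) (rule card_UN_disjoint, auto)
  also have "\<dots> = (\<Sum>d\<in>(UNIV::'a set)-{0}. card {g::'a^'n^'n. det g = 1})"
    by (rule sum.cong) (auto intro: card_det_eq)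
  also have "\<dots> = (CARD('a) - 1) * card {g::'a^'n^'n. det g = 1}" by (simp add: card_Diff_subset)
  finally show ?thesis .
qed



lemma frob_sum_set:
  fixes f :: "'b \<Rightarrow> 'a::field"
  assumes "(2::'a) = 0" and "finite A"
  shows "(\<Sum>i\<in>A. f i) ^ (2^s) = (\<Sum>i\<in>A. (f i) ^ (2^s))"
  using assms(2) by (induction A rule: finite_induct) (simp_all add: frob_add[OF assms(1)])

lemma root_step:
  fixes a :: "'a::{field,finite}"
  assumes card: "CARD('a) = 2 ^ r" and cn: "CARD('n::finite) = 2 ^ s" and a: "a \<noteq> 0"
  shows "(\<Sum>y\<in>{y::'n \<Rightarrow> 'a. (\<Prod>i\<in>UNIV. y i) = 1}. lam r (a * (\<Sum>i\<in>UNIV. y i)))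
       = (\<Sum>z\<in>{z::'n \<Rightarrow> 'a. (\<Prod>i\<in>UNIV. z i) = a}. lam r (\<Sum>i\<in>UNIV. z i))"
proof -
  have t2: "(2::'a) = 0" by (rule two_eq_zero[OF card])
  define fr where "fr = (\<lambda>w::'a. w ^ (2^s))"
  have fr_add: "fr (x + y) = fr x + fr y" for x y unfolding fr_def by (rule frob_add[OF t2])
  have injfr: "inj fr"
  proof (rule injI)
    fix x y assume "fr x = fr y"
    moreover have "fr x = fr (x - y) + fr y" using fr_add[of "x - y" y] by simp
    ultimately have "(x - y) ^ (2^s) = 0" unfolding fr_def by simp
    then show "x = y" by simp
  qed
  have surjfr: "surj fr" by (rule finite_UNIV_inj_surj[OF _ injfr]) simp
  define rt where "rt = inv_into UNIV fr"
  have frrt: "fr (rt w) = w" for w unfolding rt_def by (simp add: surj_f_inv_f[OF surjfr])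
  have rtfr: "rt (fr w) = w" for w unfolding rt_def by (simp add: inv_f_f[OF injfr])
  have frprod: "fr (\<Prod>i\<in>UNIV. z i) = (\<Prod>i\<in>UNIV. fr (z i))" for z :: "'n \<Rightarrow> 'a"
    unfolding fr_def by (simp add: prod_power_distrib)
  have frsum: "fr (\<Sum>i\<in>UNIV. z i) = (\<Sum>i\<in>UNIV. fr (z i))" for z :: "'n \<Rightarrow> 'a"
    unfolding fr_def by (rule frob_sum_set[OF t2]) simp
  have tr_fr: "lam r (fr w) = lam r w" for w unfolding fr_def lam_def using tr_pow[OF card] by simp
  have fra: "fr a = a ^ CARD('n)" unfolding fr_def cn ..
  show ?thesis
  proof (rule sum.reindex_bij_witness[where j="\<lambda>y i. rt (a * y i)" and i="\<lambda>z i. fr (z i) / a"])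
    fix y :: "'n \<Rightarrow> 'a" assume y: "y \<in> {y. (\<Prod>i\<in>UNIV. y i) = 1}"
    show "(\<lambda>i. fr (rt (a * y i)) / a) = y" using a by (simp add: frrt)
    have "fr (\<Prod>i\<in>UNIV. rt (a * y i)) = (\<Prod>i\<in>UNIV. a * y i)" by (simp add: frprod frrt)
    also have "\<dots> = a ^ CARD('n) * (\<Prod>i\<in>UNIV. y i)" by (simp add: prod.distrib)
    also have "\<dots> = fr a" using y fra by simp
    finally have "(\<Prod>i\<in>UNIV. rt (a * y i)) = a" using injfr by (simp add: inj_eq)
    then show "(\<lambda>i. rt (a * y i)) \<in> {z. (\<Prod>i\<in>UNIV. z i) = a}" by simp
    have "lam r (\<Sum>i\<in>UNIV. rt (a * y i)) = lam r (fr (\<Sum>i\<in>UNIV. rt (a * y i)))" by (simp add: tr_fr)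
    also have "\<dots> = lam r (\<Sum>i\<in>UNIV. a * y i)" by (simp add: frsum frrt)
    also have "\<dots> = lam r (a * (\<Sum>i\<in>UNIV. y i))" by (simp add: sum_distrib_left)
    finally show "lam r (\<Sum>i\<in>UNIV. rt (a * y i)) = lam r (a * (\<Sum>i\<in>UNIV. y i))" .
  next
    fix z :: "'n \<Rightarrow> 'a" assume z: "z \<in> {z. (\<Prod>i\<in>UNIV. z i) = a}"
    show "(\<lambda>i. rt (a * (fr (z i) / a))) = z" using a by (simp add: rtfr)
    have "(\<Prod>i\<in>UNIV. fr (z i) / a) = fr (\<Prod>i\<in>UNIV. z i) / a ^ CARD('n)"
      by (simp add: frprod prod_dividef)
    also have "\<dots> = 1" using z fra a by simp
    finally show "(\<lambda>i. fr (z i) / a) \<in> {y. (\<Prod>i\<in>UNIV. y i) = 1}" by simp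
  qed
qed

lemma enum_step:
  fixes a :: "'a::{field,finite}" and ord :: "'n::finite \<Rightarrow> nat"
  assumes bij: "bij_betw ord UNIV {..<CARD('n)}" and a: "a \<noteq> 0"
  shows "(\<Sum>z\<in>{z::'n \<Rightarrow> 'a. (\<Prod>i\<in>UNIV. z i) = a}. lam r (\<Sum>i\<in>UNIV. z i))
       = kloosterman r (CARD('n) - 1) a"
proof -
  let ?n = "CARD('n)"
  let ?m = "CARD('n) - 1"
  have n1: "?n = Suc ?m" by simp
  define e where "e = inv_into UNIV ord"
  have oe: "ord (e i) = i" if "i < ?n" for i
    using that bij unfolding e_def by (metis bij_betw_def f_inv_into_f lessThan_iff)
  have eo: "e (ord j) = j" for j
    using bij unfolding e_def by (metis bij_betw_def inv_into_f_f UNIV_I)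
  have ordlt: "ord j < ?n" for j using bij bij_betw_apply by fastforce
  have bije: "bij_betw e {..<?n} UNIV" unfolding e_def by (rule bij_betw_inv_into[OF bij])
  have sumE: "(\<Sum>x\<in>UNIV. F x) = (\<Sum>i<?m. F (e i)) + F (e ?m)" for F :: "'n \<Rightarrow> 'a"
  proof -
    have "(\<Sum>x\<in>UNIV. F x) = (\<Sum>i<?n. F (e i))" using sum.reindex_bij_betw[OF bije, of F] by simp
    also have "\<dots> = (\<Sum>i<Suc ?m. F (e i))" by (rule arg_cong[where f="\<lambda>k. \<Sum>i<k. F (e i)", OF n1])
    also have "\<dots> = (\<Sum>i<?m. F (e i)) + F (e ?m)" by (rule sum.lessThan_Suc)
    finally show ?thesis .
  qed
  have prodE: "(\<Prod>x\<in>UNIV. F x) = (\<Prod>i<?m. F (e i)) * F (e ?m)" for F :: "'n \<Rightarrow> 'a"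
  proof -
    have "(\<Prod>x\<in>UNIV. F x) = (\<Prod>i<?n. F (e i))" using prod.reindex_bij_betw[OF bije, of F] by simp
    also have "\<dots> = (\<Prod>i<Suc ?m. F (e i))" by (rule arg_cong[where f="\<lambda>k. \<Prod>i<k. F (e i)", OF n1])
    also have "\<dots> = (\<Prod>i<?m. F (e i)) * F (e ?m)" by (rule prod.lessThan_Suc)
    finally show ?thesis .
  qed
  show ?thesis unfolding kloosterman_def
  proof (rule sum.reindex_bij_witness[where j="\<lambda>z. restrict (\<lambda>i. z (e i)) {..<?m}"
        and i="\<lambda>\<alpha> x. if ord x < ?m then \<alpha> (ord x) else a * inverse (\<Prod>i<?m. \<alpha> i)"])
    fix z :: "'n \<Rightarrow> 'a" assume z: "z \<in> {z. (\<Prod>i\<in>UNIV. z i) = a}"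
    then have pz: "(\<Prod>i<?m. z (e i)) * z (e ?m) = a" using prodE[of z] by simp
    then have nz: "(\<Prod>i<?m. z (e i)) \<noteq> 0" using a by auto
    have last: "z (e ?m) = a * inverse (\<Prod>i<?m. z (e i))" using pz nz by (simp add: field_simps)
    show "(\<lambda>x. if ord x < ?m then restrict (\<lambda>i. z (e i)) {..<?m} (ord x)
             else a * inverse (\<Prod>i<?m. restrict (\<lambda>i. z (e i)) {..<?m} i)) = z"
    proof
      fix x
      show "(if ord x < ?m then restrict (\<lambda>i. z (e i)) {..<?m} (ord x)
             else a * inverse (\<Prod>i<?m. restrict (\<lambda>i. z (e i)) {..<?m} i)) = z x"
      proof (cases "ord x < ?m")
        case True then show ?thesis by (simp add: eo)
      next
        case False
        then have "ord x = ?m" using ordlt[of x] by simp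
        then have "x = e ?m" using eo by metis
        then show ?thesis using False last by simp
      qed
    qed
    have "\<forall>i<?m. z (e i) \<noteq> 0" using nz by auto
    then show "restrict (\<lambda>i. z (e i)) {..<?m} \<in> {..<?m} \<rightarrow>\<^sub>E UNIV - {0}" by auto
    show "lam r ((\<Sum>i<?m. restrict (\<lambda>i. z (e i)) {..<?m} i)
            + a * inverse (\<Prod>i<?m. restrict (\<lambda>i. z (e i)) {..<?m} i))
          = lam r (\<Sum>i\<in>UNIV. z i)"
      using sumE[of z] last by simp
  next
    fix \<alpha> :: "nat \<Rightarrow> 'a" assume al: "\<alpha> \<in> {..<?m} \<rightarrow>\<^sub>E UNIV - {0}"
    let ?z = "\<lambda>x. if ord x < ?m then \<alpha> (ord x) else a * inverse (\<Prod>i<?m. \<alpha> i)"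
    show "restrict (\<lambda>i. ?z (e i)) {..<?m} = \<alpha>"
    proof
      fix i show "restrict (\<lambda>i. ?z (e i)) {..<?m} i = \<alpha> i"
      proof (cases "i < ?m")
        case True then show ?thesis using oe[of i] by simp
      next
        case False then show ?thesis using PiE_arb[OF al, of i] by simp
      qed
    qed
    have pnz: "(\<Prod>i<?m. \<alpha> i) \<noteq> 0" using al by (auto simp: prod_zero_iff)
    have "(\<Prod>x\<in>UNIV. ?z x) = (\<Prod>i<?m. ?z (e i)) * ?z (e ?m)" by (rule prodE)
    also have "(\<Prod>i<?m. ?z (e i)) = (\<Prod>i<?m. \<alpha> i)" by (rule prod.cong) (auto simp: oe)
    also have "?z (e ?m) = a * inverse (\<Prod>i<?m. \<alpha> i)" by (simp add: oe)
    finally show "?z \<in> {z. (\<Prod>i\<in>UNIV. z i) = a}" using pnz by simp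
  qed
qed

lemma prod_gl_formula:
  "(\<Prod>i<m. (Q::int)^m - Q^i) = Q^(m choose 2) * (\<Prod>j\<in>{1..m}. Q^j - 1)"
proof -
  have sumi: "(\<Sum>i<m. i) = m choose 2" for m :: nat
  proof (induction m)
    case 0 then show ?case by simp
  next
    case (Suc m)
    have "(Suc m choose 2) = (m choose 1) + (m choose 2)" using binomial_Suc_Suc[of m 1] by (simp add: numeral_2_eq_2)
    then show ?case using Suc by simp
  qed
  have "(\<Prod>i<m. (Q::int)^m - Q^i) = (\<Prod>i<m. Q^i * (Q^(m-i) - 1))"
    by (rule prod.cong) (auto simp: algebra_simps simp flip: power_add)
  also have "\<dots> = (\<Prod>i<m. Q^i) * (\<Prod>i<m. Q^(m-i) - 1)" by (rule prod.distrib)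
  also have "(\<Prod>i<m. Q^i) = Q^(m choose 2)" by (simp add: power_sum[symmetric] sumi)
  also have "(\<Prod>i<m. Q^(m-i) - 1) = (\<Prod>j\<in>{1..m}. Q^j - 1)"
    by (rule prod.reindex_bij_witness[where i="\<lambda>j. m - j" and j="\<lambda>i. m - i"]) auto
  finally show ?thesis .
qed


theorem proposition10:
  fixes a :: "'a::{field,finite}" and s r :: nat
  assumes "s \<ge> 1" and "r \<ge> 1"
    and "CARD('a) = 2 ^ r"
    and "CARD('n::finite) = 2 ^ s"
    and "a \<noteq> 0"
  shows "let n = CARD('n); q = CARD('a);
             N = (int q) ^ (n choose 2) * (\<Prod>j\<in>{2..n}. (int q ^ j - 1))
         in 2 * int (codeword_weight r a TYPE('a^'n^'n))
              = N - (int q) ^ (n choose 2) * kloosterman r (n - 1) a"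
proof -
  note cardA = assms(3) and cardN = assms(4) and a = assms(5)
  let ?n = "CARD('n)" and ?q = "CARD('a)"
  obtain h where h: "bij_betw h {0..<card (UNIV::'n set)} (UNIV::'n set)"
    using ex_bij_betw_nat_finite[of "UNIV::'n set"] by auto
  define ord where "ord = inv_into {0..<?n} h"
  have bij: "bij_betw ord UNIV {..<?n}"
    unfolding ord_def using bij_betw_inv_into[OF h] by (simp add: atLeast0LessThan)
  have inj: "inj ord" using bij bij_betw_imp_inj_on by blast
  define \<psi> where "\<psi> = (\<lambda>t::'a. lam r (a * t))"
  have psi_add: "\<psi> (x + y) = \<psi> x * \<psi> y" for x y
    unfolding \<psi>_def by (simp add: distrib_left lam_add[OF cardA])
  have psi_sum: "(\<Sum>t\<in>UNIV. \<psi> (t * c)) = 0" if "c \<noteq> 0" for c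
  proof -
    have "(\<Sum>t\<in>UNIV. \<psi> (t * c)) = (\<Sum>t\<in>UNIV. lam r ((a * c) * t))"
      unfolding \<psi>_def by (simp add: ac_simps)
    also have "\<dots> = 0" using lam_sum_zero[OF cardA assms(2)] a that by simp
    finally show ?thesis .
  qed
  define K where "K = kloosterman r (?n - 1) a"
  define S where "S = (\<Sum>g\<in>{g::'a^'n^'n. det g = 1}. \<psi> (trace g))"
  have S_eq: "S = int ?q ^ (?n choose 2) * K"
  proof -
    have "S = (\<Sum>g\<in>{g::'a^'n^'n. det g = 1 \<and> upper ord g}. \<psi> (trace g))"
      unfolding S_def by (rule cancel_sum[OF psi_add psi_sum inj])
    also have "\<dots> = (\<Sum>g\<in>{g::'a^'n^'n. det g = 1 \<and> upper ord g}.
                        (\<lambda>y. lam r (a * (\<Sum>i\<in>UNIV. y i))) (\<lambda>i. g$i$i))"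
      unfolding \<psi>_def trace_def by simp
    also have "\<dots> = int ?q ^ (?n choose 2) *
        (\<Sum>y\<in>{y::'n \<Rightarrow> 'a. (\<Prod>i\<in>UNIV. y i) = 1}. lam r (a * (\<Sum>i\<in>UNIV. y i)))"
      by (rule upper_sum[OF bij])
    also have "(\<Sum>y\<in>{y::'n \<Rightarrow> 'a. (\<Prod>i\<in>UNIV. y i) = 1}. lam r (a * (\<Sum>i\<in>UNIV. y i)))
        = (\<Sum>z\<in>{z::'n \<Rightarrow> 'a. (\<Prod>i\<in>UNIV. z i) = a}. lam r (\<Sum>i\<in>UNIV. z i))"
      by (rule root_step[OF cardA cardN a])
    also have "\<dots> = K" unfolding K_def by (rule enum_step[OF bij a])
    finally show ?thesis .
  qed
  define W where "W = card {g::'a^'n^'n. g \<in> SL \<and> abs_tr r (a * trace g) \<noteq> 0}"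
  have W_eq: "S = int (card {g::'a^'n^'n. det g = 1}) - 2 * int W"
  proof -
    let ?A = "{g::'a^'n^'n. det g = 1}"
    have "S = (\<Sum>g\<in>?A. 1 - 2 * of_bool (abs_tr r (a * trace g) \<noteq> 0))"
      unfolding S_def \<psi>_def lam_def by (rule sum.cong) auto
    also have "\<dots> = int (card ?A) - 2 * (\<Sum>g\<in>?A. of_bool (abs_tr r (a * trace g) \<noteq> 0))"
      by (simp add: sum_subtractf sum_distrib_left)
    also have "(\<Sum>g\<in>?A. of_bool (abs_tr r (a * trace g) \<noteq> 0)) = (int W :: int)"
      unfolding W_def SL_def by (simp add: Int_def conj_commute)
    finally show ?thesis .
  qed
  define N where "N = int ?q ^ (?n choose 2) * (\<Prod>j\<in>{2..?n}. int ?q ^ j - 1)"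
  have card_SL: "int (card {g::'a^'n^'n. det g = 1}) = N"
  proof -
    have q2: "?q \<ge> 2" using cardA assms(2)
      by (metis One_nat_def Suc_1 Suc_le_eq le_less not_less_eq_eq one_le_numeral power_increasing power_one_right)
    have n1: "?n \<ge> 1" by (simp add: Suc_leI)
    have "card {g::'a^'n^'n. det g \<noteq> 0} = (\<Prod>i<?n. ?q ^ ?n - ?q ^ i)"
      using card_GL[OF bij] card_Lset by metis
    then have "int ((?q - 1) * card {g::'a^'n^'n. det g = 1}) = int (\<Prod>i<?n. ?q ^ ?n - ?q ^ i)"
      using card_GL_SL by metis
    also have "\<dots> = (\<Prod>i<?n. int ?q ^ ?n - int ?q ^ i)"
      using q2 by (simp add: of_nat_diff power_increasing)
    also have "\<dots> = int ?q ^ (?n choose 2) * (\<Prod>j\<in>{1..?n}. int ?q ^ j - 1)"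
      by (rule prod_gl_formula)
    also have "{1..?n} = insert 1 {2..?n}" using n1 by auto
    also have "int ?q ^ (?n choose 2) * (\<Prod>j\<in>insert 1 {2..?n}. int ?q ^ j - 1) = (int ?q - 1) * N"
      unfolding N_def by (simp add: prod.insert)
    finally have "(int ?q - 1) * int (card {g::'a^'n^'n. det g = 1}) = (int ?q - 1) * N"
      using q2 by (simp add: of_nat_diff)
    moreover have "int ?q - 1 \<noteq> 0" using q2 by simp
    ultimately show ?thesis by simp
  qed
  have "2 * int W = N - int ?q ^ (?n choose 2) * K"
    using S_eq W_eq card_SL by simp
  then show ?thesis unfolding Let_def codeword_weight_def W_def N_def K_def by simp
qed

end
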